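(* Consider the Group Lasso: $\mathbf X\in\mathbb R^{n\times p}$, coefficients partitioned into $G$ groups with fixed weights $w_g>0$, $\widehat{\boldsymbol\beta}=\arg\min_{\boldsymbol\beta}\tfrac12\|\mathbf y-\mathbf X\boldsymbol\beta\|_2^2+\gamma\sum_g w_g\|\boldsymbol\beta_g\|_2$, $\gamma\in(\gamma_l,\gamma_{l+1})$ for consecutive transition points, and $\widehat{df}_\gamma=\mathrm{trace}[(\mathbf I_n+\gamma\mathbf B)^{-1}\mathbf A]$ with $\mathbf A=\mathbf X_{\mathcal A_G}(\mathbf X_{\mathcal A_G}^\top\mathbf X_{\mathcal A_G})^{-1}\mathbf X_{\mathcal A_G}^\top$ and $\mathbf B=\mathbf X_{\mathcal A_G}(\mathbf X_{\mathcal A_G}^\top\mathbf X_{\mathcal A_G})^{-1}\boldsymbol\Pi_{\mathcal A_G}(\mathbf X_{\mathcal A_G}^\top\mathbf X_{\mathcal A_G})^{-1}\mathbf X_{\mathcal A_G}^\top$ (for $\mathbf X^\top\mathbf X=\mathbf I_p$ these reduce to $\mathbf X_{\mathcal A_G}\mathbf X_{\mathcal A_G}^\top$ and $\mathbf X_{\mathcal A_G}\boldsymbol\Pi_{\mathcal A_G}\mathbf X_{\mathcal A_G}^\top$). If every group has cardinality $n_g=1$, then $\widehat{df}_\gamma=|\mathcal A|$, the number of nonzero coefficients of $\widehat{\boldsymbol\beta}$.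
   Context: $\boldsymbol\beta_g,\widehat{\boldsymbol\beta}_g\in\mathbb R^{n_g}$ are group subvectors; $\mathcal A_G=\{g:\|\widehat{\boldsymbol\beta}_g\|_2\ne0\}$ the active groups; $\mathcal A=\{j:\widehat\beta_j\ne0\}$; $\mathbf X_{\mathcal A_G}$ the columns of $\mathbf X$ in active groups, with invertible Gram matrix; $\boldsymbol\Pi_{\mathcal A_G}=\mathrm{blockdiag}_{g\in\mathcal A_G}\big(w_g[\mathbf I_{n_g}/\|\widehat{\boldsymbol\beta}_g\|_2-\widehat{\boldsymbol\beta}_g\widehat{\boldsymbol\beta}_g^\top/\|\widehat{\boldsymbol\beta}_g\|_2^3]\big)$. Transition points are the values of $\gamma>0$ at which the active set changes. *)

theory Defs
  imports "Jordan_Normal_Form.Gauss_Jordan_Elimination" "Jordan_Normal_Form.DL_Submatrix"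
begin

(* Coefficient vectors are functions nat => real; only indices j < p matter.
   Groups: grp j \<in> {0..<G} is the group of coefficient j; group g = {j<p. grp j = g}. *)

definition rss :: "real mat \<Rightarrow> real vec \<Rightarrow> (nat \<Rightarrow> real) \<Rightarrow> real" where
  "rss X y b = (\<Sum>i<dim_row X. (y $ i - (X *\<^sub>v vec (dim_col X) b) $ i)^2)"

definition gnorm :: "nat \<Rightarrow> (nat \<Rightarrow> nat) \<Rightarrow> (nat \<Rightarrow> real) \<Rightarrow> nat \<Rightarrow> real" where
  "gnorm p grp b g = sqrt (\<Sum>j\<in>{j. j < p \<and> grp j = g}. (b j)^2)"

definition glasso_obj :: "real mat \<Rightarrow> real vec \<Rightarrow> (nat \<Rightarrow> nat) \<Rightarrow> nat \<Rightarrow> (nat \<Rightarrow> real)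
    \<Rightarrow> real \<Rightarrow> (nat \<Rightarrow> real) \<Rightarrow> real" where
  "glasso_obj X y grp G w \<gamma> b =
     rss X y b / 2 + \<gamma> * (\<Sum>g<G. w g * gnorm (dim_col X) grp b g)"

definition is_glasso_sol where
  "is_glasso_sol X y grp G w \<gamma> b \<longleftrightarrow> (\<forall>b'. glasso_obj X y grp G w \<gamma> b \<le> glasso_obj X y grp G w \<gamma> b')"

definition active_groups :: "nat \<Rightarrow> (nat \<Rightarrow> nat) \<Rightarrow> nat \<Rightarrow> (nat \<Rightarrow> real) \<Rightarrow> nat set" where
  "active_groups p grp G b = {g. g < G \<and> gnorm p grp b g \<noteq> 0}"

definition active_cols :: "nat \<Rightarrow> (nat \<Rightarrow> nat) \<Rightarrow> nat \<Rightarrow> (nat \<Rightarrow> real) \<Rightarrow> nat set" where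
  "active_cols p grp G b = {j. j < p \<and> grp j \<in> active_groups p grp G b}"

definition XA :: "real mat \<Rightarrow> (nat \<Rightarrow> nat) \<Rightarrow> nat \<Rightarrow> (nat \<Rightarrow> real) \<Rightarrow> real mat" where
  "XA X grp G b = submatrix X UNIV (active_cols (dim_col X) grp G b)"

(* Pi_{A_G}, indexed consistently with the columns of X_{A_G} (block diagonal up to this
   ordering of the active columns) *)
definition PiA :: "real mat \<Rightarrow> (nat \<Rightarrow> nat) \<Rightarrow> nat \<Rightarrow> (nat \<Rightarrow> real) \<Rightarrow> (nat \<Rightarrow> real) \<Rightarrow> real mat" where
  "PiA X grp G w b =
    (let p = dim_col X; S = active_cols p grp G b; k = card S in
     mat k k (\<lambda>(l, l'). let j = pick S l; j' = pick S l'; g = grp j; ng = gnorm p grp b g in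
        if grp j' = g then w g * ((if l = l' then 1 else 0) / ng - b j * b j' / ng ^ 3) else 0))"

definition gram_inv :: "real mat \<Rightarrow> (nat \<Rightarrow> nat) \<Rightarrow> nat \<Rightarrow> (nat \<Rightarrow> real) \<Rightarrow> real mat" where
  "gram_inv X grp G b = the (mat_inverse (transpose_mat (XA X grp G b) * XA X grp G b))"

definition Amat :: "real mat \<Rightarrow> (nat \<Rightarrow> nat) \<Rightarrow> nat \<Rightarrow> (nat \<Rightarrow> real) \<Rightarrow> real mat" where
  "Amat X grp G b = XA X grp G b * gram_inv X grp G b * transpose_mat (XA X grp G b)"

definition Bmat :: "real mat \<Rightarrow> (nat \<Rightarrow> nat) \<Rightarrow> nat \<Rightarrow> (nat \<Rightarrow> real) \<Rightarrow> (nat \<Rightarrow> real) \<Rightarrow> real mat" where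
  "Bmat X grp G w b = XA X grp G b * gram_inv X grp G b * PiA X grp G w b
                      * gram_inv X grp G b * transpose_mat (XA X grp G b)"

definition mat_trace :: "real mat \<Rightarrow> real" where
  "mat_trace M = (\<Sum>i<dim_row M. M $$ (i, i))"

definition df_hat :: "real mat \<Rightarrow> (nat \<Rightarrow> nat) \<Rightarrow> nat \<Rightarrow> (nat \<Rightarrow> real) \<Rightarrow> real \<Rightarrow> (nat \<Rightarrow> real) \<Rightarrow> real" where
  "df_hat X grp G w \<gamma> b =
     mat_trace (the (mat_inverse (1\<^sub>m (dim_row X) + \<gamma> \<cdot>\<^sub>m Bmat X grp G w b)) * Amat X grp G b)"

end

theory Submission
  imports Defs
begin

lemma trace_comm_aux:
  fixes A B :: "real mat"
  assumes "A \<in> carrier_mat n k" "B \<in> carrier_mat k n"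
  shows "mat_trace (A * B) = mat_trace (B * A)"
proof -
  have "mat_trace (A * B) = (\<Sum>i<n. \<Sum>j<k. A $$ (i,j) * B $$ (j,i))"
    using assms unfolding mat_trace_def
    by (auto simp: scalar_prod_def row_def col_def atLeast0LessThan intro!: sum.cong)
  also have "\<dots> = (\<Sum>j<k. \<Sum>i<n. B $$ (j,i) * A $$ (i,j))"
    by (subst sum.swap) (simp add: mult.commute)
  also have "\<dots> = mat_trace (B * A)"
    using assms unfolding mat_trace_def
    by (auto simp: scalar_prod_def row_def col_def atLeast0LessThan intro!: sum.cong)
  finally show ?thesis .
qed

lemma inv_some:
  fixes M :: "real mat"
  assumes M: "M \<in> carrier_mat k k" and inv: "invertible_mat M"
  shows "\<exists>Mi. mat_inverse M = Some Mi \<and> M * Mi = 1\<^sub>m k \<and> Mi * M = 1\<^sub>m k \<and> Mi \<in> carrier_mat k k"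
proof -
  obtain B where B: "M * B = 1\<^sub>m (dim_row M)" "B * M = 1\<^sub>m (dim_row B)"
    using inv unfolding invertible_mat_def inverts_mat_def by blast
  have "dim_col (M * B) = k" using B(1) M by simp
  then have c: "dim_col B = k" by simp
  have "dim_col (B * M) = dim_row B" using B(2) by simp
  then have r: "dim_row B = k" using M by simp
  have Bc: "B \<in> carrier_mat k k" using c r by auto
  have "M \<in> Units (ring_mat TYPE(real) k ())"
    unfolding Units_def using M Bc B r
    by (auto simp: ring_mat_simps)
  then have "mat_inverse M \<noteq> None" using mat_inverse(1)[OF M, where b="()"] by auto
  then obtain Mi where "mat_inverse M = Some Mi" by auto
  then show ?thesis using mat_inverse(2)[OF M] by blast
qed

theorem corollaryS4:
  fixes X :: "real mat" and y :: "real vec" and n p G :: nat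
    and grp :: "nat \<Rightarrow> nat" and w :: "nat \<Rightarrow> real"
    and bhat :: "real \<Rightarrow> nat \<Rightarrow> real" and \<gamma> \<gamma>l \<gamma>u :: real
  assumes "X \<in> carrier_mat n p" and "y \<in> carrier_vec n"
    and "\<forall>j<p. grp j < G"
    and "\<forall>g<G. w g > 0"
    and "0 \<le> \<gamma>l" and "\<gamma>l < \<gamma>" and "\<gamma> < \<gamma>u"
    and "\<forall>t\<in>{\<gamma>l<..<\<gamma>u}. is_glasso_sol X y grp G w t (bhat t)"
    and "\<forall>t\<in>{\<gamma>l<..<\<gamma>u}. active_groups p grp G (bhat t) = active_groups p grp G (bhat \<gamma>)"
    and "invertible_mat (transpose_mat (XA X grp G (bhat \<gamma>)) * XA X grp G (bhat \<gamma>))"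
    and "\<forall>g<G. card {j. j < p \<and> grp j = g} = 1"
  shows "df_hat X grp G w \<gamma> (bhat \<gamma>) = real (card {j. j < p \<and> bhat \<gamma> j \<noteq> 0})"
proof -
  define b where "b = bhat \<gamma>"
  define S where "S = active_cols p grp G b"
  define k where "k = card S"
  have Xc: "dim_row X = n" "dim_col X = p" using assms(1) by auto
  have grpS: "{j'. j' < p \<and> grp j' = grp j} = {j}" if "j < p" for j
  proof -
    have "grp j < G" using assms(3) that by blast
    then have "card {j'. j' < p \<and> grp j' = grp j} = 1" using assms(11) by blast
    then obtain a where a: "{j'. j' < p \<and> grp j' = grp j} = {a}" using card_1_singletonE by blast
    have "j \<in> {j'. j' < p \<and> grp j' = grp j}" using that by auto
    then show ?thesis using a by auto
  qed
  have inj: "j = j'" if "j < p" "j' < p" "grp j = grp j'" for j j'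
  proof -
    have "j' \<in> {j'. j' < p \<and> grp j' = grp j}" using that by simp
    then show ?thesis unfolding grpS[OF that(1)] by simp
  qed
  have gn: "gnorm p grp b (grp j) = \<bar>b j\<bar>" if "j < p" for j
    unfolding gnorm_def grpS[OF that] by simp
  have Seq: "S = {j. j < p \<and> b j \<noteq> 0}"
  proof -
    have "S = {j. j < p \<and> grp j < G \<and> gnorm p grp b (grp j) \<noteq> 0}"
      unfolding S_def active_cols_def active_groups_def by simp
    also have "\<dots> = {j. j < p \<and> b j \<noteq> 0}"
    proof (rule Collect_cong)
      fix j show "(j < p \<and> grp j < G \<and> gnorm p grp b (grp j) \<noteq> 0) = (j < p \<and> b j \<noteq> 0)"
        using gn[of j] assms(3) by (cases "j < p") auto
    qed
    finally show ?thesis .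
  qed
  have finS: "finite S" unfolding Seq by auto
  define XX where "XX = XA X grp G b"
  have XXc: "XX \<in> carrier_mat n k"
  proof -
    have "{j. j < p \<and> j \<in> S} = S" unfolding Seq by blast
    moreover have "{i. i < n \<and> i \<in> (UNIV :: nat set)} = {..<n}" by blast
    ultimately show ?thesis unfolding XX_def XA_def carrier_mat_def Xc S_def[symmetric] k_def
      by (simp add: dim_submatrix Xc)
  qed
  have Mc: "transpose_mat XX * XX \<in> carrier_mat k k" using XXc by auto
  obtain Mi where Mi: "mat_inverse (transpose_mat XX * XX) = Some Mi"
      "transpose_mat XX * XX * Mi = 1\<^sub>m k" "Mi * (transpose_mat XX * XX) = 1\<^sub>m k"
      "Mi \<in> carrier_mat k k"
    using inv_some[OF Mc] assms(10) unfolding XX_def b_def by blast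
  have gi: "gram_inv X grp G b = Mi" unfolding gram_inv_def XX_def[symmetric] Mi(1) by simp
  have Pi0: "PiA X grp G w b = 0\<^sub>m k k"
  proof (rule eq_matI)
    show dims: "dim_row (PiA X grp G w b) = dim_row (0\<^sub>m k k)" "dim_col (PiA X grp G w b) = dim_col (0\<^sub>m k k)"
      unfolding PiA_def Let_def Xc S_def[symmetric] k_def by auto
    fix l l' assume l: "l < dim_row (0\<^sub>m k k)" "l' < dim_col (0\<^sub>m k k)"
    then have lk: "l < card S" "l' < card S" unfolding k_def by auto
    have pS: "pick S l \<in> S" "pick S l' \<in> S" using pick_in_set_le lk by auto
    have cp: "card {a\<in>S. a < pick S l} = l" "card {a\<in>S. a < pick S l'} = l'"
      using card_pick_le lk by auto
    show "PiA X grp G w b $$ (l, l') = 0\<^sub>m k k $$ (l, l')"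
    proof (cases "grp (pick S l') = grp (pick S l)")
      case True
      then have "pick S l' = pick S l" using inj pS unfolding Seq by auto
      then have "l = l'" using cp by metis
      have "b (pick S l) \<noteq> 0" "pick S l < p" using pS unfolding Seq by auto
      then have "(1 / \<bar>b (pick S l)\<bar> - b (pick S l) * b (pick S l) / \<bar>b (pick S l)\<bar> ^ 3) = 0"
        by (simp add: field_simps power3_eq_cube abs_mult_self_eq)
      then show ?thesis using True \<open>l = l'\<close> lk gn \<open>pick S l < p\<close>
        unfolding PiA_def Let_def Xc S_def[symmetric] k_def by simp
    next
      case False
      then show ?thesis using lk
        unfolding PiA_def Let_def Xc S_def[symmetric] k_def by simp
    qed
  qed
  have XT: "transpose_mat XX \<in> carrier_mat k n" using XXc by simp
  have XM: "XX * Mi \<in> carrier_mat n k" using XXc Mi(4) by (rule mult_carrier_mat)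
  have "Bmat X grp G w b = XX * Mi * 0\<^sub>m k k * Mi * transpose_mat XX"
    unfolding Bmat_def gi Pi0 XX_def by (rule refl)
  also have "XX * Mi * 0\<^sub>m k k = 0\<^sub>m n k" using XM by (rule right_mult_zero_mat)
  also have "0\<^sub>m n k * Mi = 0\<^sub>m n k" using Mi(4) by (rule left_mult_zero_mat)
  also have "0\<^sub>m n k * transpose_mat XX = 0\<^sub>m n n" using XT by (rule left_mult_zero_mat)
  finally have B0: "Bmat X grp G w b = 0\<^sub>m n n" .
  have I: "1\<^sub>m (dim_row X) + \<gamma> \<cdot>\<^sub>m Bmat X grp G w b = 1\<^sub>m n"
    unfolding B0 Xc smult_zero_mat by (rule right_add_zero_mat) (rule one_carrier_mat)
  have inv1: "invertible_mat (1\<^sub>m n :: real mat)"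
    unfolding invertible_mat_def inverts_mat_def by (intro conjI exI[of _ "1\<^sub>m n"]) auto
  obtain C where C: "mat_inverse (1\<^sub>m n :: real mat) = Some C" "1\<^sub>m n * C = 1\<^sub>m n" "C \<in> carrier_mat n n"
    using inv_some[OF one_carrier_mat inv1] by blast
  have C1: "C = 1\<^sub>m n" using C(2) left_mult_one_mat[OF C(3)] by simp
  have AM: "Amat X grp G b = XX * Mi * transpose_mat XX"
    unfolding Amat_def gi XX_def by (rule refl)
  have AMc: "XX * Mi * transpose_mat XX \<in> carrier_mat n n" using XM XT by (rule mult_carrier_mat)
  have "df_hat X grp G w \<gamma> b = mat_trace (1\<^sub>m n * (XX * Mi * transpose_mat XX))"
    unfolding df_hat_def I C(1) C1 AM by simp
  also have "1\<^sub>m n * (XX * Mi * transpose_mat XX) = XX * Mi * transpose_mat XX"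
    using AMc by (rule left_mult_one_mat)
  also have "mat_trace (XX * Mi * transpose_mat XX) = mat_trace (transpose_mat XX * (XX * Mi))"
    using XM XT by (rule trace_comm_aux)
  also have "transpose_mat XX * (XX * Mi) = transpose_mat XX * XX * Mi"
    using assoc_mult_mat[OF XT XXc Mi(4)] by (rule sym)
  also have "\<dots> = 1\<^sub>m k" by (rule Mi(2))
  also have "mat_trace (1\<^sub>m k) = real k" unfolding mat_trace_def by simp
  finally have "df_hat X grp G w \<gamma> b = real k" .
  then show ?thesis using Seq unfolding b_def k_def by simp
qed

end
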